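(* Let $a=e_1=(1,0,\dots,0)$, let $P$ be a distribution on $\mathbb{R}^k$ with finite second moments and covariance $\Sigma$ whose minimal eigenvalue is $\gamma_{\min}>0$, and let $\widehat\Sigma$ be any non-random symmetric positive-definite matrix with $\|\widehat\Sigma-\Sigma\|_F\le\gamma_{\min}/2$. Let $\hat\theta_{\mathrm{MultiPPI}(\widehat\Sigma)}$ be computed on samples from $P$ (independent of nothing but themselves, as described in the context). Then \[ \mathbb{E}\Big[\big(\hat\theta_{\mathrm{MultiPPI}(\widehat\Sigma)}-\theta^*\big)^2\Big]\le\mathcal V_B+\frac{4\sigma^2_{\mathrm{classical}}}{\gamma_{\min}}\,\|\widehat\Sigma-\Sigma\|_F , \] where $\|\cdot\|_F$ is the Frobenius norm.
   Context: $X\sim P$ in $\mathbb{R}^k$, $\theta^*=a^\top\mathbb{E}X=\mathbb{E}X_1$. $\mathcal I$ is a collection of nonempty subsets of $\{1,\dots,k\}$; $P_I:\mathbb{R}^k\to\mathbb{R}^{|I|}$ is the coordinate projection onto $I$; for a matrix $A$, $A_I=P_IAP_I^\top$. Costs $c_I\in\mathbb{R}^m_{\ge0}$, budget $B\in\mathbb{R}^m_{\ge0}$, vector inequalities componentwise; an allocation $\underline n\in\mathbb{Z}^{\mathcal I}_{\ge0}$ is feasible if $\sum_In_Ic_I\le B$. Weights $\lambda_I\in\mathbb{R}^{|I|}$ are unbiased if $\sum_{I:n_I>0}P_I^\top\lambda_I=a$. For SPD $A$, $\hat\theta_{\mathrm{MultiPPI}(A)}=\sum_{I:n_I>0}\frac1{n_I}\sum_{j=1}^{n_I}\lambda_I^\top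 X_I^{(I,j)}$, where $(\underline n,\underline\lambda)$ minimizes $\sum_{I:n_I>0}\frac1{n_I}\lambda_I^\top A_I\lambda_I$ over feasible unbiased pairs and $X^{(I,j)}$ are mutually independent copies of $X\sim P$ (only coordinates $I$ observed). $\mathcal V_B$ is the minimum of $\sum_{I:n_I>0}\frac1{n_I}\lambda_I^\top\Sigma_I\lambda_I$ over feasible unbiased pairs. $\sigma^2_{\mathrm{classical}}=\min\Sigma_{11}/n^0_{I^0}$, the minimum over $I^0\in\mathcal I$ with $1\in I^0$, where $n^0_{I^0}$ is the largest integer $n$ with $nc_{I^0}\le B$; assume at least one such $I^0$ has $n^0_{I^0}\ge1$. *)

theory Defs
  imports "HOL-Probability.Probability"
begin

text \<open>Vectors in R^k are modelled as real^'k for a finite index type 'k; index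
  sets I are subsets of 'k; weights lambda_I in R^{|I|} are modelled by their
  zero-extension P_I^T lambda_I, i.e. vectors in real^'k vanishing outside I.\<close>

definition eigenvalues :: "real^'n^'n \<Rightarrow> real set" where
  "eigenvalues A = {c. \<exists>v. v \<noteq> 0 \<and> A *v v = c *\<^sub>R v}"

definition min_eigenvalue :: "real^'n^'n \<Rightarrow> real" where
  "min_eigenvalue A = Min (eigenvalues A)"

definition frob_norm :: "real^'n^'n \<Rightarrow> real" where
  "frob_norm A = sqrt (\<Sum>i\<in>UNIV. \<Sum>j\<in>UNIV. (A $ i $ j)\<^sup>2)"

definition spd :: "real^'n^'n \<Rightarrow> bool" where
  "spd A \<longleftrightarrow> transpose A = A \<and> (\<forall>x. x \<noteq> 0 \<longrightarrow> x \<bullet> (A *v x) > 0)"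

definition mean_vec :: "(real^'k) measure \<Rightarrow> real^'k" where
  "mean_vec P = (\<chi> i. \<integral>x. x $ i \<partial>P)"

definition cov_matrix :: "(real^'k) measure \<Rightarrow> real^'k^'k" where
  "cov_matrix P = (\<chi> i j. \<integral>x. (x $ i - mean_vec P $ i) * (x $ j - mean_vec P $ j) \<partial>P)"

definition feasible_alloc ::
  "'k set set \<Rightarrow> ('k set \<Rightarrow> real^'m) \<Rightarrow> real^'m \<Rightarrow> ('k set \<Rightarrow> nat) \<Rightarrow> bool" where
  "feasible_alloc \<I> c B n \<longleftrightarrow>
     (\<forall>I. I \<notin> \<I> \<longrightarrow> n I = 0) \<and>
     (\<forall>r. (\<Sum>I\<in>\<I>. real (n I) * (c I $ r)) \<le> B $ r)"

definition unbiased_weights ::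
  "'k set set \<Rightarrow> real^'k \<Rightarrow> ('k set \<Rightarrow> nat) \<Rightarrow> ('k set \<Rightarrow> real^'k) \<Rightarrow> bool" where
  "unbiased_weights \<I> a n l \<longleftrightarrow>
     (\<forall>I\<in>\<I>. n I > 0 \<longrightarrow> (\<forall>i. i \<notin> I \<longrightarrow> l I $ i = 0)) \<and>
     (\<Sum>I\<in>{I\<in>\<I>. n I > 0}. l I) = a"

definition feasible_unbiased ::
  "'k set set \<Rightarrow> ('k set \<Rightarrow> real^'m) \<Rightarrow> real^'m \<Rightarrow> real^'k
     \<Rightarrow> ('k set \<Rightarrow> nat) \<Rightarrow> ('k set \<Rightarrow> real^'k) \<Rightarrow> bool" where
  "feasible_unbiased \<I> c B a n l \<longleftrightarrow> feasible_alloc \<I> c B n \<and> unbiased_weights \<I> a n l"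

text \<open>Objective sum_{I: n_I>0} (1/n_I) lambda_I^T A_I lambda_I; since lambda is
  zero outside I this equals (P_I^T lambda_I)^T A (P_I^T lambda_I).\<close>
definition alloc_objective ::
  "real^'k^'k \<Rightarrow> 'k set set \<Rightarrow> ('k set \<Rightarrow> nat) \<Rightarrow> ('k set \<Rightarrow> real^'k) \<Rightarrow> real" where
  "alloc_objective A \<I> n l = (\<Sum>I\<in>{I\<in>\<I>. n I > 0}. (l I \<bullet> (A *v l I)) / real (n I))"

definition V_B ::
  "real^'k^'k \<Rightarrow> 'k set set \<Rightarrow> ('k set \<Rightarrow> real^'m) \<Rightarrow> real^'m \<Rightarrow> real^'k \<Rightarrow> real" where
  "V_B \<Sigma> \<I> c B a = Inf {alloc_objective \<Sigma> \<I> n l | n l. feasible_unbiased \<I> c B a n l}"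

text \<open>sigma^2_classical = min over I0 in the collection with the distinguished
  coordinate in I0 of Sigma_11 / n^0_{I0}, n^0_{I0} the largest n with n c_{I0} <= B
  (only I0 with n^0_{I0} >= 1 count).  Since Sigma_11 >= 0, the minimum over the
  largest n equals the infimum over all admissible n >= 1.\<close>
definition sigma2_classical ::
  "real^'k^'k \<Rightarrow> 'k \<Rightarrow> 'k set set \<Rightarrow> ('k set \<Rightarrow> real^'m) \<Rightarrow> real^'m \<Rightarrow> real" where
  "sigma2_classical \<Sigma> one \<I> c B =
     Inf {\<Sigma> $ one $ one / real N | I0 N. I0 \<in> \<I> \<and> one \<in> I0 \<and> N \<ge> 1 \<and>
            (\<forall>r. real N * (c I0 $ r) \<le> B $ r)}"

definition multippi_est ::
  "'k set set \<Rightarrow> ('k set \<Rightarrow> nat) \<Rightarrow> ('k set \<Rightarrow> real^'k) \<Rightarrow> ('k set \<Rightarrow> nat \<Rightarrow> 'w \<Rightarrow> real^'k)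
     \<Rightarrow> 'w \<Rightarrow> real" where
  "multippi_est \<I> n l X \<omega> =
     (\<Sum>I\<in>{I\<in>\<I>. n I > 0}. (1 / real (n I)) * (\<Sum>j<n I. l I \<bullet> X I j \<omega>))"

end

theory Submission
  imports Defs
begin


lemma sym_inner:
  fixes A :: "real^'n^'n"
  assumes "transpose A = A"
  shows "(A *v u) \<bullet> w = u \<bullet> (A *v w)"
proof -
  have "A *v u = u v* A" by (metis assms vector_transpose_matrix)
  then show ?thesis by (simp add: dot_lmul_matrix)
qed

lemma eigenvalues_finite:
  fixes A :: "real^'n^'n"
  assumes sym: "transpose A = A"
  shows "finite (eigenvalues A)"
proof -
  define f where "f c = (SOME v. v \<noteq> 0 \<and> A *v v = c *\<^sub>R v)" for c
  have f: "f c \<noteq> 0 \<and> A *v f c = c *\<^sub>R f c" if "c \<in> eigenvalues A" for c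
    using that unfolding eigenvalues_def f_def by (rule CollectE) (rule someI_ex)
  have orth: "f c \<bullet> f d = 0" if "c \<in> eigenvalues A" "d \<in> eigenvalues A" "c \<noteq> d" for c d
  proof -
    have "c * (f c \<bullet> f d) = (A *v f c) \<bullet> f d" using f[OF that(1)] by simp
    also have "\<dots> = f c \<bullet> (A *v f d)" by (rule sym_inner[OF sym])
    also have "\<dots> = d * (f c \<bullet> f d)" using f[OF that(2)] by simp
    finally show ?thesis using that(3) by simp
  qed
  have inj: "inj_on f (eigenvalues A)"
  proof (rule inj_onI)
    fix c d assume cd: "c \<in> eigenvalues A" "d \<in> eigenvalues A" "f c = f d"
    show "c = d"
    proof (rule ccontr)
      assume "c \<noteq> d"
      then have "f c \<bullet> f d = 0" using orth cd by blast
      then have "f c = 0" using cd(3) by simp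
      then show False using f[OF cd(1)] by simp
    qed
  qed
  have "pairwise orthogonal (f ` eigenvalues A)"
    unfolding pairwise_def orthogonal_def using orth by fastforce
  moreover have "0 \<notin> f ` eigenvalues A" using f by fastforce
  ultimately have "independent (f ` eigenvalues A)"
    by (rule pairwise_orthogonal_independent)
  then have "finite (f ` eigenvalues A)" using independent_bound by blast
  then show ?thesis using inj finite_imageD by blast
qed

lemma aux_neg:
  fixes R W :: real
  assumes "R \<ge> 0" "W > 0"
  shows "2 * (- W / (R + 1)) * W + (- W / (R + 1))\<^sup>2 * R < 0"
proof -
  define s where "s = W / (R + 1)"
  have s: "s > 0" using assms by (simp add: s_def)
  have "s * R < W" using assms by (simp add: s_def field_simps)
  then have "s * (s * R - 2 * W) < 0" using s assms by (intro mult_pos_neg) auto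
  moreover have "2 * (- W / (R + 1)) * W + (- W / (R + 1))\<^sup>2 * R = s * (s * R - 2 * W)"
  proof -
    have e: "- W / (R + 1) = - s" by (simp add: s_def)
    show ?thesis unfolding e by (simp add: power2_eq_square algebra_simps)
  qed
  ultimately show ?thesis by simp
qed

lemma quad_ge_min_eig:
  fixes A :: "real^'n^'n"
  assumes sym: "transpose A = A"
  shows "x \<bullet> (A *v x) \<ge> min_eigenvalue A * (norm x)\<^sup>2"
proof -
  define q where "q y = y \<bullet> (A *v y)" for y :: "real^'n"
  have cq: "continuous_on (sphere 0 1) q"
    unfolding q_def by (intro continuous_intros linear_continuous_on) (simp add: matrix_vector_mul_linear)
  have ne: "sphere (0::real^'n) 1 \<noteq> {}" by simp
  obtain v where v: "v \<in> sphere 0 1" and vmin: "\<And>y. y \<in> sphere 0 1 \<Longrightarrow> q v \<le> q y"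
    using continuous_attains_inf[OF compact_sphere ne cq] by blast
  define mu where "mu = q v"
  have qs: "q (t *\<^sub>R y) = t\<^sup>2 * q y" for t y
    by (simp add: q_def matrix_vector_mult_scaleR power2_eq_square)
  have ge: "q y \<ge> mu * (norm y)\<^sup>2" for y
  proof (cases "y = 0")
    case True then show ?thesis by (simp add: q_def)
  next
    case False
    have "(inverse (norm y)) *\<^sub>R y \<in> sphere 0 1" using False by (simp add: norm_scaleR)
    then have "mu \<le> q ((inverse (norm y)) *\<^sub>R y)" using vmin mu_def by blast
    also have "\<dots> = q y / (norm y)\<^sup>2" by (simp add: qs power_inverse divide_inverse_commute)
    finally show ?thesis using False by (simp add: field_simps)
  qed
  have eig: "A *v v = mu *\<^sub>R v"
  proof (rule ccontr)
    define w where "w = A *v v - mu *\<^sub>R v"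
    assume "A *v v \<noteq> mu *\<^sub>R v"
    then have wpos: "(norm w)\<^sup>2 > 0" by (simp add: w_def)
    define r where "r y = q y - mu * (norm y)\<^sup>2" for y
    have r0: "r y \<ge> 0" for y using ge[of y] by (simp add: r_def)
    have nv: "norm v = 1" using v by simp
    have exp: "r (v + t *\<^sub>R w) = r v + 2 * t * (w \<bullet> w) + t\<^sup>2 * r w" for t
    proof -
      have a: "q (v + t *\<^sub>R w) = q v + 2 * t * ((A *v v) \<bullet> w) + t\<^sup>2 * q w"
        using sym_inner[OF sym, of w v]
        by (simp add: q_def matrix_vector_right_distrib matrix_vector_mult_scaleR inner_add_left
            inner_add_right power2_eq_square algebra_simps inner_commute)
      have b: "(norm (v + t *\<^sub>R w))\<^sup>2 = (norm v)\<^sup>2 + 2 * t * (v \<bullet> w) + t\<^sup>2 * (norm w)\<^sup>2"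
        unfolding power2_norm_eq_inner by (simp add: inner_add_left inner_add_right power2_eq_square algebra_simps inner_commute)
      have c: "w \<bullet> w = (A *v v) \<bullet> w - mu * (v \<bullet> w)"
        by (simp add: w_def inner_diff_left)
      show ?thesis unfolding r_def a b c by (simp add: algebra_simps)
    qed
    have rv: "r v = 0" using nv by (simp add: r_def mu_def)
    define R where "R = r w"
    define t where "t = - (w \<bullet> w) / (R + 1)"
    have R0: "R \<ge> 0" using r0 R_def by simp
    have ww: "w \<bullet> w > 0" using wpos by (simp add: power2_norm_eq_inner)
    have "r (v + t *\<^sub>R w) < 0"
      unfolding exp rv R_def[symmetric] t_def using aux_neg[OF R0 ww] by simp
    then show False using r0 by (metis not_le)
  qed
  have "v \<noteq> 0" using v by auto
  then have "mu \<in> eigenvalues A" using eig unfolding eigenvalues_def by blast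
  then have "min_eigenvalue A \<le> mu"
    unfolding min_eigenvalue_def using eigenvalues_finite[OF sym] by simp
  then have "min_eigenvalue A * (norm x)\<^sup>2 \<le> mu * (norm x)\<^sup>2"
    by (simp add: mult_right_mono)
  also have "\<dots> \<le> q x" by (rule ge)
  finally show ?thesis by (simp add: q_def)
qed


lemma matvec_row: "(D *v x) $ i = D $ i \<bullet> (x :: real^'n)"
  by (simp add: matrix_vector_mult_def inner_vec_def)

lemma frob_quad:
  fixes D :: "real^'n^'n"
  shows "\<bar>x \<bullet> (D *v x)\<bar> \<le> frob_norm D * (norm x)\<^sup>2"
proof -
  define F2 where "F2 = (\<Sum>i\<in>UNIV. \<Sum>j\<in>UNIV. (D $ i $ j)\<^sup>2)"
  have F2: "F2 \<ge> 0" unfolding F2_def by (intro sum_nonneg) auto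
  have row: "(norm (D $ i))\<^sup>2 = (\<Sum>j\<in>UNIV. (D $ i $ j)\<^sup>2)" for i
    unfolding power2_norm_eq_inner by (simp add: inner_vec_def power2_eq_square)
  have "(norm (D *v x))\<^sup>2 = (\<Sum>i\<in>UNIV. ((D *v x) $ i)\<^sup>2)"
    unfolding power2_norm_eq_inner by (simp add: inner_vec_def power2_eq_square)
  also have "\<dots> \<le> (\<Sum>i\<in>UNIV. (norm (D $ i))\<^sup>2 * (norm x)\<^sup>2)"
  proof (rule sum_mono)
    fix i
    have "\<bar>(D *v x) $ i\<bar> \<le> norm (D $ i) * norm x"
      unfolding matvec_row by (rule Cauchy_Schwarz_ineq2)
    then have "\<bar>(D *v x) $ i\<bar>\<^sup>2 \<le> (norm (D $ i) * norm x)\<^sup>2"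
      by (intro power_mono) auto
    then show "((D *v x) $ i)\<^sup>2 \<le> (norm (D $ i))\<^sup>2 * (norm x)\<^sup>2"
      by (simp add: power_mult_distrib)
  qed
  also have "\<dots> = F2 * (norm x)\<^sup>2"
    unfolding F2_def row by (simp add: sum_distrib_right)
  also have "\<dots> = (frob_norm D * norm x)\<^sup>2"
    using F2 by (simp add: frob_norm_def F2_def[symmetric] power_mult_distrib)
  finally have "norm (D *v x) \<le> frob_norm D * norm x"
    by (rule power2_le_imp_le) (use F2 in \<open>simp add: frob_norm_def F2_def[symmetric]\<close>)
  then have "norm x * norm (D *v x) \<le> norm x * (frob_norm D * norm x)"
    by (intro mult_left_mono) auto
  moreover have "\<bar>x \<bullet> (D *v x)\<bar> \<le> norm x * norm (D *v x)" by (rule Cauchy_Schwarz_ineq2)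
  ultimately show ?thesis by (simp add: power2_eq_square algebra_simps)
qed

definition wnorm :: "'k set set \<Rightarrow> ('k set \<Rightarrow> nat) \<Rightarrow> ('k set \<Rightarrow> real^'k) \<Rightarrow> real" where
  "wnorm \<I> n l = (\<Sum>I\<in>{I\<in>\<I>. n I > 0}. (norm (l I))\<^sup>2 / real (n I))"

lemma wnorm_nonneg: "wnorm \<I> n l \<ge> 0"
  unfolding wnorm_def by (intro sum_nonneg) auto

lemma obj_ge:
  fixes A :: "real^'k^'k"
  assumes "transpose A = A"
  shows "alloc_objective A \<I> n l \<ge> min_eigenvalue A * wnorm \<I> n l"
  unfolding alloc_objective_def wnorm_def sum_distrib_left
proof (rule sum_mono)
  fix I assume "I \<in> {I \<in> \<I>. 0 < n I}"
  then have "real (n I) > 0" by simp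
  show "min_eigenvalue A * ((norm (l I))\<^sup>2 / real (n I)) \<le> l I \<bullet> (A *v l I) / real (n I)"
    unfolding times_divide_eq_right
    by (rule divide_right_mono) (use quad_ge_min_eig[OF assms, of "l I"] in auto)
qed

lemma obj_diff:
  fixes D :: "real^'k^'k"
  shows "\<bar>alloc_objective D \<I> n l\<bar> \<le> frob_norm D * wnorm \<I> n l"
proof -
  have "\<bar>alloc_objective D \<I> n l\<bar> \<le> (\<Sum>I\<in>{I\<in>\<I>. n I > 0}. \<bar>l I \<bullet> (D *v l I) / real (n I)\<bar>)"
    unfolding alloc_objective_def by (rule sum_abs)
  also have "\<dots> \<le> (\<Sum>I\<in>{I\<in>\<I>. n I > 0}. frob_norm D * ((norm (l I))\<^sup>2 / real (n I)))"
  proof (rule sum_mono)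
    fix I assume "I \<in> {I \<in> \<I>. 0 < n I}"
    then have p: "real (n I) > 0" by simp
    have "\<bar>l I \<bullet> (D *v l I)\<bar> / real (n I) \<le> frob_norm D * (norm (l I))\<^sup>2 / real (n I)"
      using frob_quad[of "l I" D] p by (simp add: divide_right_mono)
    then show "\<bar>l I \<bullet> (D *v l I) / real (n I)\<bar> \<le> frob_norm D * ((norm (l I))\<^sup>2 / real (n I))"
      using p by simp
  qed
  also have "\<dots> = frob_norm D * wnorm \<I> n l"
    unfolding wnorm_def by (simp add: sum_distrib_left)
  finally show ?thesis .
qed

lemma obj_add:
  "alloc_objective (A + D) \<I> n l = alloc_objective A \<I> n l + alloc_objective D \<I> n l"
  unfolding alloc_objective_def
  by (simp add: matrix_vector_mult_add_rdistrib inner_add_right add_divide_distrib sum.distrib)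


lemma classical_feasible:
  fixes S :: "real^'k^'k" and c :: "'k set \<Rightarrow> real^'m"
  assumes Iz: "Iz \<in> \<I>" "one \<in> Iz" "N \<ge> 1" "\<forall>r. real N * (c Iz $ r) \<le> B $ r"
  shows "feasible_unbiased \<I> c B (axis one 1) (\<lambda>I. if I = Iz then N else 0) (\<lambda>I. axis one 1)"
    and "alloc_objective S \<I> (\<lambda>I. if I = Iz then N else 0) (\<lambda>I. axis one 1) = S $ one $ one / real N"
proof -
  have set: "{I\<in>\<I>. (if I = Iz then N else 0) > 0} = {Iz}" using Iz by auto
  have fin: "finite \<I>" by simp
  have sumc: "(\<Sum>I\<in>\<I>. real (if I = Iz then N else 0) * (c I $ r)) = real N * (c Iz $ r)" for r
    using Iz(1) by (simp add: if_distrib[of real] if_distrib[of "\<lambda>x. x * _"] sum.delta' fin cong: if_cong)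
  show "feasible_unbiased \<I> c B (axis one 1) (\<lambda>I. if I = Iz then N else 0) (\<lambda>I. axis one 1)"
    unfolding feasible_unbiased_def feasible_alloc_def unbiased_weights_def set
    using Iz sumc by (auto simp: axis_def)
  have "axis one 1 \<bullet> (S *v axis one (1::real)) = S $ one $ one"
    by (simp only: inner_axis') (simp add: matrix_vector_mult_def axis_def if_distrib cong: if_cong)
  then show "alloc_objective S \<I> (\<lambda>I. if I = Iz then N else 0) (\<lambda>I. axis one 1) = S $ one $ one / real N"
    unfolding alloc_objective_def set by simp
qed

lemma det_main:
  fixes S Sh :: "real^'k^'k" and c :: "'k set \<Rightarrow> real^'m"
  assumes symS: "transpose S = S"
    and gpos: "min_eigenvalue S > 0"
    and close: "frob_norm (Sh - S) \<le> min_eigenvalue S / 2"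
    and cex: "\<exists>I0\<in>\<I>. one \<in> I0 \<and> (\<forall>r. c I0 $ r \<le> B $ r)"
    and opt_min: "\<forall>n' l'. feasible_unbiased \<I> c B (axis one 1) n' l' \<longrightarrow>
                     alloc_objective Sh \<I> n l \<le> alloc_objective Sh \<I> n' l'"
  shows "alloc_objective S \<I> n l \<le> V_B S \<I> c B (axis one 1)
           + 4 * sigma2_classical S one \<I> c B / min_eigenvalue S * frob_norm (Sh - S)"
proof -
  define g where "g = min_eigenvalue S"
  define e where "e = frob_norm (Sh - S)"
  define t where "t = e / g"
  have e0: "e \<ge> 0" unfolding e_def frob_norm_def by (simp add: sum_nonneg)
  have g0: "g > 0" using gpos g_def by simp
  have t0: "t \<ge> 0" "t \<le> 1/2" using e0 g0 close by (auto simp: t_def e_def g_def field_simps)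
  have Sh: "Sh = S + (Sh - S)" by simp
  have split: "alloc_objective Sh \<I> n' l' = alloc_objective S \<I> n' l' + alloc_objective (Sh - S) \<I> n' l'" for n' l'
    by (subst Sh, rule obj_add)
  have dif: "\<bar>alloc_objective (Sh - S) \<I> n' l'\<bar> \<le> e * wnorm \<I> n' l'" for n' l'
    unfolding e_def by (rule obj_diff)
  have ge: "alloc_objective S \<I> n' l' \<ge> g * wnorm \<I> n' l'" for n' l'
    unfolding g_def by (rule obj_ge[OF symS])
  have key: "alloc_objective S \<I> n l \<le> (1 + 4 * t) * alloc_objective S \<I> n' l'"
    if f: "feasible_unbiased \<I> c B (axis one 1) n' l'" for n' l'
  proof -
    define a where "a = alloc_objective S \<I> n l"
    define h where "h = alloc_objective Sh \<I> n l"
    define s where "s = wnorm \<I> n l"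
    define W where "W = alloc_objective S \<I> n' l'"
    define h' where "h' = alloc_objective Sh \<I> n' l'"
    define s' where "s' = wnorm \<I> n' l'"
    have s0: "s \<ge> 0" "s' \<ge> 0" unfolding s_def s'_def by (auto intro: wnorm_nonneg)
    have eg: "e = t * g" using g0 by (simp add: t_def)
    have 1: "a \<le> h + e * s" using split[of n l] dif[of n l] unfolding a_def h_def s_def by linarith
    have 2: "h \<le> h'" using opt_min f unfolding h_def h'_def by blast
    have 3: "h' \<le> W + e * s'" using split[of n' l'] dif[of n' l'] unfolding W_def h'_def s'_def by linarith
    have 4: "g * s' \<le> W" using ge[of n' l'] unfolding W_def s'_def .
    have 5: "h \<ge> (g - e) * s" using split[of n l] dif[of n l] ge[of n l] unfolding h_def s_def
      by (simp add: algebra_simps)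
    have "g * s' \<ge> 0" using g0 s0 by simp
    then have W0: "W \<ge> 0" using 4 by linarith
    have es': "e * s' \<le> t * W" using 4 t0 unfolding eg by (simp add: mult.assoc mult_left_mono)
    have H: "h \<le> (1 + t) * W" using 2 3 es' by (simp add: algebra_simps)
    have "g * s \<le> 2 * h"
    proof -
      have "(g - e) * s \<ge> (g / 2) * s" using close s0 unfolding e_def[symmetric] g_def[symmetric]
        by (intro mult_right_mono) auto
      then show ?thesis using 5 by simp
    qed
    then have "t * (g * s) \<le> t * (2 * h)" using t0 by (intro mult_left_mono) auto
    then have es: "e * s \<le> 2 * t * h" unfolding eg by (simp add: algebra_simps)
    have "a \<le> (1 + 2 * t) * h" using 1 es by (simp add: algebra_simps)
    also have "\<dots> \<le> (1 + 2 * t) * ((1 + t) * W)" using H t0 by (intro mult_left_mono) auto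
    also have "\<dots> \<le> (1 + 4 * t) * W"
    proof -
      have "t * (2 * t) \<le> t * 1" using t0 by (intro mult_left_mono) auto
      then have "(1 + 2 * t) * (1 + t) \<le> 1 + 4 * t" by (simp add: algebra_simps)
      then show ?thesis using W0 by (metis mult.assoc mult_right_mono)
    qed
    finally show ?thesis unfolding a_def W_def .
  qed
  define VS where "VS = {alloc_objective S \<I> n' l' | n' l'. feasible_unbiased \<I> c B (axis one 1) n' l'}"
  define CS where "CS = {S $ one $ one / real N | I0 N. I0 \<in> \<I> \<and> one \<in> I0 \<and> N \<ge> 1 \<and>
            (\<forall>r. real N * (c I0 $ r) \<le> B $ r)}"
  obtain I0 where I0: "I0 \<in> \<I>" "one \<in> I0" "\<forall>r. c I0 $ r \<le> B $ r" using cex by blast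
  have I0': "\<forall>r. real 1 * (c I0 $ r) \<le> B $ r" using I0 by simp
  have VSne: "VS \<noteq> {}" unfolding VS_def using classical_feasible(1)[where Iz=I0 and N=1 and c=c and B=B and one=one] I0 by auto
  have CSne: "CS \<noteq> {}" unfolding CS_def using I0' I0 by blast
  have VS0: "x \<ge> 0" if "x \<in> VS" for x
  proof -
    obtain n' l' where "x = alloc_objective S \<I> n' l'" using \<open>x \<in> VS\<close> unfolding VS_def by blast
    moreover have "g * wnorm \<I> n' l' \<ge> 0" using g0 wnorm_nonneg[of \<I> n' l'] by simp
    ultimately show ?thesis using ge[of n' l'] by linarith
  qed
  have VSbdd: "bdd_below VS" unfolding bdd_below_def using VS0 by blast
  have "alloc_objective S \<I> n l / (1 + 4 * t) \<le> Inf VS"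
    using VSne proof (rule cInf_greatest)
    fix x assume "x \<in> VS"
    then obtain n' l' where "feasible_unbiased \<I> c B (axis one 1) n' l'" "x = alloc_objective S \<I> n' l'"
      unfolding VS_def by blast
    then show "alloc_objective S \<I> n l / (1 + 4 * t) \<le> x" using key t0 by (simp add: field_simps)
  qed
  then have A: "alloc_objective S \<I> n l \<le> (1 + 4 * t) * Inf VS" using t0 by (simp add: field_simps)
  have B: "Inf VS \<le> Inf CS"
    using CSne proof (rule cInf_greatest)
    fix x assume "x \<in> CS"
    then obtain J N where J: "J \<in> \<I>" "one \<in> J" "N \<ge> 1" "\<forall>r. real N * (c J $ r) \<le> B $ r" "x = S $ one $ one / real N"
      unfolding CS_def by blast
    have f1: "feasible_unbiased \<I> c B (axis one 1) (\<lambda>I. if I = J then N else 0) (\<lambda>I. axis one 1)"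
      using classical_feasible(1)[where Iz=J and N=N and c=c and B=B and one=one] J(1-4) by blast
    have "x = alloc_objective S \<I> (\<lambda>I. if I = J then N else 0) (\<lambda>I. axis one 1)"
      using classical_feasible(2)[where Iz=J and N=N and c=c and B=B and one=one and S=S] J by simp
    then have "x \<in> VS" unfolding VS_def using f1 by blast
    then show "Inf VS \<le> x" using VSbdd by (rule cInf_lower)
  qed
  have "alloc_objective S \<I> n l \<le> Inf VS + 4 * t * Inf CS"
  proof -
    have "4 * t * Inf VS \<le> 4 * t * Inf CS" using B t0 by (intro mult_left_mono) auto
    then show ?thesis using A by (simp add: algebra_simps)
  qed
  then show ?thesis
    unfolding V_B_def sigma2_classical_def VS_def[symmetric] CS_def[symmetric] t_def e_def g_def
    by (simp add: field_simps)
qed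



locale Pmom = prob_space P for P :: "(real^'k) measure" +
  assumes P_sets: "sets P = sets borel"
    and P_m2: "integrable P (\<lambda>x. (norm x)\<^sup>2)"
begin

lemma Pmeas: "f \<in> borel_measurable borel \<Longrightarrow> f \<in> borel_measurable P"
  by (simp add: measurable_cong_sets[OF P_sets refl])

lemma Pint_comp: "integrable P (\<lambda>x. x $ i)"
proof (rule Bochner_Integration.integrable_bound)
  show "integrable P (\<lambda>x. 1 + (norm x)\<^sup>2)" using P_m2 by simp
  show "(\<lambda>x. x $ i) \<in> borel_measurable P" by (rule Pmeas) simp
  show "AE x in P. norm (x $ i) \<le> norm (1 + (norm x)\<^sup>2)"
  proof (rule AE_I2)
    fix x :: "real^'k"
    have "\<bar>x $ i\<bar> \<le> norm x" by (rule component_le_norm_cart)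
    also have "norm x \<le> 1 + (norm x)\<^sup>2"
    proof -
      have "0 \<le> (norm x - 1)\<^sup>2" by simp
      then have "0 \<le> norm x * norm x - 2 * norm x + 1" by (simp add: power2_eq_square algebra_simps)
      moreover have "0 \<le> norm x * norm x" by simp
      ultimately show ?thesis unfolding power2_eq_square by linarith
    qed
    finally show "norm (x $ i) \<le> norm (1 + (norm x)\<^sup>2)" by simp
  qed
qed

lemma Pint_prod: "integrable P (\<lambda>x. x $ i * x $ j)"
proof (rule Bochner_Integration.integrable_bound)
  show "integrable P (\<lambda>x. (norm x)\<^sup>2)" by (rule P_m2)
  show "(\<lambda>x. x $ i * x $ j) \<in> borel_measurable P" by (rule Pmeas) simp
  show "AE x in P. norm (x $ i * x $ j) \<le> norm ((norm x)\<^sup>2)"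
  proof (rule AE_I2)
    fix x :: "real^'k"
    have "\<bar>x $ i\<bar> * \<bar>x $ j\<bar> \<le> norm x * norm x"
      by (intro mult_mono component_le_norm_cart) auto
    then show "norm (x $ i * x $ j) \<le> norm ((norm x)\<^sup>2)" by (simp add: power2_eq_square abs_mult)
  qed
qed

lemma Pint_cen: "integrable P (\<lambda>x. (x $ i - a) * (x $ j - b))"
proof -
  have e: "(\<lambda>x. (x $ i - a) * (x $ j - b)) = (\<lambda>x. x $ i * x $ j - b * x $ i - a * x $ j + a * b)"
    by (auto simp: algebra_simps)
  show ?thesis unfolding e using Pint_prod Pint_comp by simp
qed

lemma Pint_lin: "integrable P (\<lambda>x. v \<bullet> (x - m))"
  unfolding inner_vec_def using Pint_comp by simp

lemma Pint_lin_zero: "(\<integral>x. v \<bullet> (x - mean_vec P) \<partial>P) = 0"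
proof -
  have "(\<integral>x. v \<bullet> (x - mean_vec P) \<partial>P) = (\<Sum>i\<in>UNIV. v $ i * ((\<integral>x. x $ i \<partial>P) - mean_vec P $ i))"
    unfolding inner_vec_def using Pint_comp by (simp add: prob_space)
  also have "\<dots> = 0" by (simp add: mean_vec_def)
  finally show ?thesis .
qed

lemma sq_expand: "(v \<bullet> (x - m))\<^sup>2 = (\<Sum>i\<in>UNIV. \<Sum>j\<in>UNIV. v $ i * v $ j * ((x $ i - m $ i) * (x $ j - m $ j)))"
  unfolding inner_vec_def power2_eq_square sum_product by (simp add: mult.commute mult.left_commute)

lemma Pint_sq: "integrable P (\<lambda>x. (v \<bullet> (x - m))\<^sup>2)"
  unfolding sq_expand using Pint_cen by simp

lemma Pint_sq_val: "(\<integral>x. (v \<bullet> (x - mean_vec P))\<^sup>2 \<partial>P) = v \<bullet> (cov_matrix P *v v)"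
proof -
  have "(\<integral>x. (v \<bullet> (x - mean_vec P))\<^sup>2 \<partial>P)
      = (\<Sum>i\<in>UNIV. \<Sum>j\<in>UNIV. v $ i * v $ j * cov_matrix P $ i $ j)"
    unfolding sq_expand using Pint_cen by (simp add: cov_matrix_def)
  also have "\<dots> = v \<bullet> (cov_matrix P *v v)"
    by (simp add: inner_vec_def matrix_vector_mult_def sum_distrib_left mult.commute mult.left_commute)
  finally show ?thesis .
qed

end


lemma (in Pmom) mse:
  fixes M :: "'w measure" and \<I> :: "'k set set" and n :: "'k set \<Rightarrow> nat"
    and l :: "'k set \<Rightarrow> real^'k" and X :: "'k set \<Rightarrow> nat \<Rightarrow> 'w \<Rightarrow> real^'k"
  assumes M_prob: "prob_space M"
    and X_rv: "\<forall>I\<in>\<I>. \<forall>j<n I. X I j \<in> borel_measurable M"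
    and X_dist: "\<forall>I\<in>\<I>. \<forall>j<n I. distr M borel (X I j) = P"
    and X_indep: "prob_space.indep_vars M (\<lambda>_. borel) (\<lambda>(I, j). X I j)
                    {(I, j). I \<in> \<I> \<and> j < n I}"
    and unb: "(\<Sum>I\<in>{I\<in>\<I>. n I > 0}. l I) = axis one 1"
  shows "(\<integral>\<omega>. (multippi_est \<I> n l X \<omega> - (\<integral>x. x $ one \<partial>P))\<^sup>2 \<partial>M)
         = alloc_objective (cov_matrix P) \<I> n l"
proof -
  interpret M: prob_space M by (rule M_prob)
  define S where "S = {I\<in>\<I>. n I > 0}"
  define J where "J = {(I, j). I \<in> \<I> \<and> j < n I}"
  define mu where "mu = mean_vec P"
  define h where "h I x = (l I \<bullet> (x - mu)) / real (n I)" for I x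
  define Xf where "Xf = (\<lambda>(I, j). X I j)"
  define Y where "Y p \<omega> = h (fst p) (Xf p \<omega>)" for p \<omega>
  have finS: "finite S" by simp
  have JS: "J = Sigma S (\<lambda>I. {..<n I})" unfolding J_def S_def by auto
  have finJ: "finite J" unfolding JS using finS by auto
  have hm: "h I \<in> borel_measurable borel" for I unfolding h_def by simp
  
  have est: "multippi_est \<I> n l X \<omega> - (\<integral>x. x $ one \<partial>P) = (\<Sum>p\<in>J. Y p \<omega>)" for \<omega>
  proof -
    have "(\<Sum>p\<in>J. Y p \<omega>) = (\<Sum>I\<in>S. \<Sum>j<n I. Y (I, j) \<omega>)"
      unfolding JS by (subst sum.Sigma) (auto simp: finS)
    also have "\<dots> = (\<Sum>I\<in>S. (1 / real (n I)) * (\<Sum>j<n I. l I \<bullet> X I j \<omega>) - l I \<bullet> mu)"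
    proof (rule sum.cong[OF refl])
      fix I assume "I \<in> S"
      then have np: "real (n I) > 0" unfolding S_def by simp
      have "(\<Sum>j<n I. Y (I, j) \<omega>) = (\<Sum>j<n I. l I \<bullet> X I j \<omega> - l I \<bullet> mu) / real (n I)"
        unfolding Y_def h_def Xf_def by (simp add: sum_divide_distrib inner_diff_right)
      also have "\<dots> = ((\<Sum>j<n I. l I \<bullet> X I j \<omega>) - real (n I) * (l I \<bullet> mu)) / real (n I)"
        by (simp add: sum_subtractf)
      also have "\<dots> = (1 / real (n I)) * (\<Sum>j<n I. l I \<bullet> X I j \<omega>) - l I \<bullet> mu"
        using np by (simp add: field_simps)
      finally show "(\<Sum>j<n I. Y (I, j) \<omega>) = (1 / real (n I)) * (\<Sum>j<n I. l I \<bullet> X I j \<omega>) - l I \<bullet> mu" .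
    qed
    also have "\<dots> = multippi_est \<I> n l X \<omega> - (\<Sum>I\<in>S. l I) \<bullet> mu"
      unfolding multippi_est_def S_def by (simp add: sum_subtractf inner_sum_left)
    also have "(\<Sum>I\<in>S. l I) \<bullet> mu = (\<integral>x. x $ one \<partial>P)"
      using unb unfolding S_def mu_def by (simp add: inner_axis' mean_vec_def)
    finally show ?thesis by simp
  qed
  
  have pJ: "fst p \<in> \<I>" "snd p < n (fst p)" "n (fst p) > 0" if "p \<in> J" for p
    using that unfolding J_def by auto
  have Xrv: "Xf p \<in> borel_measurable M" and Xd: "distr M borel (Xf p) = P" if "p \<in> J" for p
    using that X_rv X_dist unfolding J_def Xf_def by auto
  have Ym: "Y p \<in> borel_measurable M" if "p \<in> J" for p
    unfolding Y_def using measurable_comp[OF Xrv[OF that] hm, unfolded comp_def] .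
  have intP: "integrable M (\<lambda>\<omega>. f (Xf p \<omega>)) \<longleftrightarrow> integrable P f"
    if "p \<in> J" "f \<in> borel_measurable borel" for p and f :: "real^'k \<Rightarrow> real"
    using integrable_distr_eq[OF Xrv[OF that(1)] that(2)] Xd[OF that(1)] by simp
  have intE: "(\<integral>\<omega>. f (Xf p \<omega>) \<partial>M) = (\<integral>x. f x \<partial>P)"
    if "p \<in> J" "f \<in> borel_measurable borel" for p and f :: "real^'k \<Rightarrow> real"
    using integral_distr[OF Xrv[OF that(1)] that(2)] Xd[OF that(1)] by simp
  have Yint: "integrable M (Y p)" and Y0: "(\<integral>\<omega>. Y p \<omega> \<partial>M) = 0" if "p \<in> J" for p
  proof -
    have "integrable P (h (fst p))" unfolding h_def using Pint_lin by simp
    then show "integrable M (Y p)" unfolding Y_def using intP[OF that hm] by simp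
    have "(\<integral>x. h (fst p) x \<partial>P) = 0" unfolding h_def mu_def using Pint_lin_zero by simp
    then show "(\<integral>\<omega>. Y p \<omega> \<partial>M) = 0" unfolding Y_def using intE[OF that hm] by simp
  qed
  have Ysq: "integrable M (\<lambda>\<omega>. Y p \<omega> * Y p \<omega>)"
    and Ysq_val: "(\<integral>\<omega>. Y p \<omega> * Y p \<omega> \<partial>M) = (l (fst p) \<bullet> (cov_matrix P *v l (fst p))) / (real (n (fst p)))\<^sup>2"
    if "p \<in> J" for p
  proof -
    define g where "g x = h (fst p) x * h (fst p) x" for x
    have gm: "g \<in> borel_measurable borel" unfolding g_def using hm by simp
    have ge: "g x = (l (fst p) \<bullet> (x - mu))\<^sup>2 / (real (n (fst p)))\<^sup>2" for x
      unfolding g_def h_def by (simp add: power2_eq_square)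
    have "integrable P g" unfolding ge using Pint_sq by simp
    then show "integrable M (\<lambda>\<omega>. Y p \<omega> * Y p \<omega>)" unfolding Y_def using intP[OF that gm] by (simp add: g_def)
    have "(\<integral>x. g x \<partial>P) = (l (fst p) \<bullet> (cov_matrix P *v l (fst p))) / (real (n (fst p)))\<^sup>2"
      unfolding ge mu_def using Pint_sq_val by simp
    then show "(\<integral>\<omega>. Y p \<omega> * Y p \<omega> \<partial>M) = (l (fst p) \<bullet> (cov_matrix P *v l (fst p))) / (real (n (fst p)))\<^sup>2"
      unfolding Y_def using intE[OF that gm] by (simp add: g_def)
  qed
  
  have indY: "M.indep_vars (\<lambda>_. borel) Y J"
  proof -
    have "M.indep_vars (\<lambda>_. borel) (\<lambda>p \<omega>. h (fst p) (Xf p \<omega>)) J"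
      by (rule M.indep_vars_compose2[OF X_indep[folded J_def Xf_def]]) (rule hm)
    then show ?thesis unfolding Y_def .
  qed
  have Ypq: "integrable M (\<lambda>\<omega>. Y p \<omega> * Y q \<omega>) \<and> (\<integral>\<omega>. Y p \<omega> * Y q \<omega> \<partial>M) = 0"
    if "p \<in> J" "q \<in> J" "p \<noteq> q" for p q
  proof -
    have ind2: "M.indep_vars (\<lambda>_. borel) Y {p, q}"
      by (rule M.indep_vars_subset[OF indY]) (use that in auto)
    have ints: "\<And>i. i \<in> {p, q} \<Longrightarrow> integrable M (Y i)" using Yint that by auto
    have pr: "(\<Prod>i\<in>{p, q}. Y i \<omega>) = Y p \<omega> * Y q \<omega>" for \<omega> using that by simp
    have "integrable M (\<lambda>\<omega>. \<Prod>i\<in>{p, q}. Y i \<omega>)"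
      by (rule M.indep_vars_integrable[OF _ ind2 ints]) auto
    moreover have "(\<integral>\<omega>. (\<Prod>i\<in>{p, q}. Y i \<omega>) \<partial>M) = (\<Prod>i\<in>{p, q}. \<integral>\<omega>. Y i \<omega> \<partial>M)"
      by (rule M.indep_vars_lebesgue_integral[OF _ ind2 ints]) auto
    ultimately show ?thesis unfolding pr using Y0 that by simp
  qed
  have Yall: "integrable M (\<lambda>\<omega>. Y p \<omega> * Y q \<omega>)" if "p \<in> J" "q \<in> J" for p q
    using Ypq[OF that] Ysq[OF that(1)] by (cases "p = q") auto
  
  have "(\<integral>\<omega>. (multippi_est \<I> n l X \<omega> - (\<integral>x. x $ one \<partial>P))\<^sup>2 \<partial>M)
      = (\<integral>\<omega>. (\<Sum>p\<in>J. \<Sum>q\<in>J. Y p \<omega> * Y q \<omega>) \<partial>M)"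
    unfolding est power2_eq_square sum_product ..
  also have "\<dots> = (\<Sum>p\<in>J. \<Sum>q\<in>J. \<integral>\<omega>. Y p \<omega> * Y q \<omega> \<partial>M)"
    using Yall by (simp add: integral_sum)
  also have "\<dots> = (\<Sum>p\<in>J. \<integral>\<omega>. Y p \<omega> * Y p \<omega> \<partial>M)"
  proof (rule sum.cong[OF refl])
    fix p assume p: "p \<in> J"
    have "(\<Sum>q\<in>J. \<integral>\<omega>. Y p \<omega> * Y q \<omega> \<partial>M) = (\<Sum>q\<in>J. if q = p then \<integral>\<omega>. Y p \<omega> * Y p \<omega> \<partial>M else 0)"
      using Ypq p by (intro sum.cong refl) auto
    also have "\<dots> = (\<integral>\<omega>. Y p \<omega> * Y p \<omega> \<partial>M)" using p finJ by (simp add: sum.delta)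
    finally show "(\<Sum>q\<in>J. \<integral>\<omega>. Y p \<omega> * Y q \<omega> \<partial>M) = (\<integral>\<omega>. Y p \<omega> * Y p \<omega> \<partial>M)" .
  qed
  also have "\<dots> = (\<Sum>p\<in>J. (l (fst p) \<bullet> (cov_matrix P *v l (fst p))) / (real (n (fst p)))\<^sup>2)"
    using Ysq_val by (intro sum.cong refl) auto
  also have "\<dots> = (\<Sum>I\<in>S. \<Sum>j<n I. (l I \<bullet> (cov_matrix P *v l I)) / (real (n I))\<^sup>2)"
    unfolding JS by (subst sum.Sigma) (auto simp: finS split_beta)
  also have "\<dots> = (\<Sum>I\<in>S. (l I \<bullet> (cov_matrix P *v l I)) / real (n I))"
  proof (rule sum.cong[OF refl])
    fix I assume "I \<in> S"
    then have np: "real (n I) > 0" unfolding S_def by simp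
    then show "(\<Sum>j<n I. (l I \<bullet> (cov_matrix P *v l I)) / (real (n I))\<^sup>2) = (l I \<bullet> (cov_matrix P *v l I)) / real (n I)"
      by (simp add: power2_eq_square field_simps)
  qed
  also have "\<dots> = alloc_objective (cov_matrix P) \<I> n l"
    unfolding alloc_objective_def S_def ..
  finally show ?thesis .
qed


theorem theorem3:
  fixes P :: "(real^'k) measure"
    and M :: "'w measure"
    and one :: 'k
    and \<I> :: "'k set set"
    and c :: "'k set \<Rightarrow> real^'m"
    and B :: "real^'m"
    and \<Sigma>hat :: "real^'k^'k"
    and n :: "'k set \<Rightarrow> nat"
    and l :: "'k set \<Rightarrow> real^'k"
    and X :: "'k set \<Rightarrow> nat \<Rightarrow> 'w \<Rightarrow> real^'k"
  assumes P_prob: "prob_space P" and P_sets: "sets P = sets borel"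
    and P_moment2: "integrable P (\<lambda>x. (norm x)\<^sup>2)"
    and gamma_pos: "min_eigenvalue (cov_matrix P) > 0"
    and I_nonempty: "\<forall>I\<in>\<I>. I \<noteq> {}"
    and c_nonneg: "\<forall>I r. 0 \<le> c I $ r"
    and B_nonneg: "\<forall>r. 0 \<le> B $ r"
    and classical_ex: "\<exists>I0\<in>\<I>. one \<in> I0 \<and> (\<forall>r. c I0 $ r \<le> B $ r)"
    and Shat_spd: "spd \<Sigma>hat"
    and Shat_close: "frob_norm (\<Sigma>hat - cov_matrix P) \<le> min_eigenvalue (cov_matrix P) / 2"
    and opt_feas: "feasible_unbiased \<I> c B (axis one 1) n l"
    and opt_min: "\<forall>n' l'. feasible_unbiased \<I> c B (axis one 1) n' l' \<longrightarrow>
                     alloc_objective \<Sigma>hat \<I> n l \<le> alloc_objective \<Sigma>hat \<I> n' l'"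
    and M_prob: "prob_space M"
    and X_rv: "\<forall>I\<in>\<I>. \<forall>j<n I. X I j \<in> borel_measurable M"
    and X_dist: "\<forall>I\<in>\<I>. \<forall>j<n I. distr M borel (X I j) = P"
    and X_indep: "prob_space.indep_vars M (\<lambda>_. borel) (\<lambda>(I, j). X I j)
                    {(I, j). I \<in> \<I> \<and> j < n I}"
  shows "prob_space.expectation M
           (\<lambda>\<omega>. (multippi_est \<I> n l X \<omega> - (\<integral>x. x $ one \<partial>P))\<^sup>2)
         \<le> V_B (cov_matrix P) \<I> c B (axis one 1)
           + 4 * sigma2_classical (cov_matrix P) one \<I> c B / min_eigenvalue (cov_matrix P)
             * frob_norm (\<Sigma>hat - cov_matrix P)"
  proof -
  interpret Pm: Pmom P
    by (rule Pmom.intro[OF P_prob]) (rule Pmom_axioms.intro[OF P_sets P_moment2])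
  have unb: "(\<Sum>I\<in>{I\<in>\<I>. n I > 0}. l I) = axis one 1"
    using opt_feas unfolding feasible_unbiased_def unbiased_weights_def by blast
  have eq: "prob_space.expectation M
           (\<lambda>\<omega>. (multippi_est \<I> n l X \<omega> - (\<integral>x. x $ one \<partial>P))\<^sup>2) = alloc_objective (cov_matrix P) \<I> n l"
    by (rule Pm.mse[OF M_prob X_rv X_dist X_indep unb])
  have sym: "transpose (cov_matrix P) = cov_matrix P"
    by (simp add: transpose_def cov_matrix_def vec_eq_iff mult.commute)
  show ?thesis unfolding eq
    by (rule det_main[OF sym gamma_pos Shat_close classical_ex opt_min])
qed

end
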